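(* Let $N\ge 1$ and let $M=\prod_{i=1}^{N}M_i\subset\mathbb{R}^N$ be compact, with each $M_i\subset\mathbb{R}$. Let $U=\prod_{i=1}^{N}U_i\subset\mathbb{C}^N$, where each $U_i$ is an open domain of $\mathbb{C}$ symmetric about the real axis with $M_i\subset U_i$, and let $\partial\bar U:=\prod_{i=1}^N\partial \bar U_i$. Then the Cauchy kernel functions are dense in $\mathcal{F}_M$: every continuous function $f:M\to\mathbb{R}$ is a uniform limit on $M$ of finite linear combinations $\sum_{k=1}^m\theta_k K(\boldsymbol{\xi}_k,\cdot)$ with $m\ge1$, $\theta_k\in\mathbb{C}$ and $\boldsymbol{\xi}_k\in\partial\bar U$.
   Context: $\mathcal{F}_M$ denotes the space of continuous functions $M\to\mathbb{R}$. For $\boldsymbol{\xi}=(\xi^1,\dots,\xi^N)\in\partial\bar U$ and $\mathbf{x}=(x_1,\dots,x_N)\in M$, the Cauchy kernel is $K(\boldsymbol{\xi},\mathbf{x}):=\prod_{i=1}^{N}\frac{1}{\xi^i-x_i}$. *)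

theory Defs
  imports "HOL-Analysis.Analysis"
begin

text \<open>Cauchy kernel K(xi, x) = prod_i 1/(xi_i - x_i); the index type 'n is the
  finite index set {1..N}.\<close>
definition cauchy_kernel :: "complex ^ 'n::finite \<Rightarrow> real ^ 'n \<Rightarrow> complex" where
  "cauchy_kernel \<xi> x = (\<Prod>i\<in>UNIV. 1 / (\<xi> $ i - complex_of_real (x $ i)))"

definition prod_set_real :: "('n::finite \<Rightarrow> real set) \<Rightarrow> (real ^ 'n) set" where
  "prod_set_real A = {x. \<forall>i. x $ i \<in> A i}"

definition prod_set_complex :: "('n::finite \<Rightarrow> complex set) \<Rightarrow> (complex ^ 'n) set" where
  "prod_set_complex A = {z. \<forall>i. z $ i \<in> A i}"

end

theory Submission
  imports Defs
begin

definition ks :: "('b \<Rightarrow> 'a \<Rightarrow> complex) \<Rightarrow> (complex \<times> 'b) list \<Rightarrow> 'a \<Rightarrow> complex" where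
  "ks kern L t = (\<Sum>p\<leftarrow>L. fst p * kern (snd p) t)"

lemma ks_append[simp]: "ks kern (L1 @ L2) t = ks kern L1 t + ks kern L2 t"
  by (simp add: ks_def)

lemma ks_Nil[simp]: "ks kern [] t = 0"
  by (simp add: ks_def)

lemma ks_scale: "ks kern (map (\<lambda>p. (c * fst p, snd p)) L) t = c * ks kern L t"
  by (induction L) (auto simp: ks_def algebra_simps)

definition apprG :: "('b \<Rightarrow> 'a \<Rightarrow> complex) \<Rightarrow> 'a set \<Rightarrow> 'b set \<Rightarrow> ('a \<Rightarrow> complex) \<Rightarrow> bool" where
  "apprG kern K F h \<longleftrightarrow> (\<forall>e>0. \<exists>L. (\<forall>p\<in>set L. snd p \<in> F) \<and> (\<forall>t\<in>K. cmod (h t - ks kern L t) < e))"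

abbreviation appr1 :: "real set \<Rightarrow> complex set \<Rightarrow> (real \<Rightarrow> complex) \<Rightarrow> bool" where
  "appr1 \<equiv> apprG (\<lambda>\<xi> t. 1 / (\<xi> - complex_of_real t))"

lemma appr1_add:
  assumes "apprG kern K F f" "apprG kern K F g"
  shows "apprG kern K F (\<lambda>t. f t + g t)"
  unfolding apprG_def
proof (intro allI impI)
  fix e :: real assume e: "e > 0"
  obtain L1 where L1: "\<forall>p\<in>set L1. snd p \<in> F" "\<forall>t\<in>K. cmod (f t - ks kern L1 t) < e/2"
    using assms(1) e unfolding apprG_def by (meson half_gt_zero)
  obtain L2 where L2: "\<forall>p\<in>set L2. snd p \<in> F" "\<forall>t\<in>K. cmod (g t - ks kern L2 t) < e/2"
    using assms(2) e unfolding apprG_def by (meson half_gt_zero)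
  show "\<exists>L. (\<forall>p\<in>set L. snd p \<in> F) \<and> (\<forall>t\<in>K. cmod (f t + g t - ks kern L t) < e)"
  proof (intro exI[of _ "L1 @ L2"] conjI ballI)
    fix p assume "p \<in> set (L1@L2)" thus "snd p \<in> F" using L1 L2 by auto
  next
    fix t assume t: "t \<in> K"
    have "cmod (f t + g t - ks kern (L1 @ L2) t) = cmod ((f t - ks kern L1 t) + (g t - ks kern L2 t))"
      by (simp add: algebra_simps)
    also have "\<dots> \<le> cmod (f t - ks kern L1 t) + cmod (g t - ks kern L2 t)" by (rule norm_triangle_ineq)
    also have "\<dots> < e/2 + e/2" using L1 L2 t by (intro add_strict_mono) auto
    finally show "cmod (f t + g t - ks kern (L1 @ L2) t) < e" by simp
  qed
qed

lemma appr1_zero: "apprG kern K F (\<lambda>t. 0)"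
  unfolding apprG_def by (intro allI impI exI[of _ "[]"]) auto

lemma appr1_cmult:
  assumes "apprG kern K F f"
  shows "apprG kern K F (\<lambda>t. c * f t)"
proof (cases "c = 0")
  case True thus ?thesis using appr1_zero by simp
next
  case False
  show ?thesis unfolding apprG_def
  proof (intro allI impI)
    fix e :: real assume e: "e > 0"
    have "e / cmod c > 0" using e False by simp
    then obtain L where L: "\<forall>p\<in>set L. snd p \<in> F" "\<forall>t\<in>K. cmod (f t - ks kern L t) < e / cmod c"
      using assms unfolding apprG_def by blast
    show "\<exists>L. (\<forall>p\<in>set L. snd p \<in> F) \<and> (\<forall>t\<in>K. cmod (c * f t - ks kern L t) < e)"
    proof (intro exI[of _ "map (\<lambda>p. (c * fst p, snd p)) L"] conjI ballI)
      fix p assume "p \<in> set (map (\<lambda>p. (c * fst p, snd p)) L)" thus "snd p \<in> F" using L by auto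
    next
      fix t assume t: "t \<in> K"
      have "cmod (c * f t - ks kern (map (\<lambda>p. (c * fst p, snd p)) L) t) = cmod c * cmod (f t - ks kern L t)"
        by (simp add: ks_scale algebra_simps norm_mult flip: norm_mult)
      also have "\<dots> < cmod c * (e / cmod c)" using L t False by (intro mult_strict_left_mono) auto
      finally show "cmod (c * f t - ks kern (map (\<lambda>p. (c * fst p, snd p)) L) t) < e" using False by simp
    qed
  qed
qed

lemma appr1_cong:
  assumes "apprG kern K F f" "\<And>t. t \<in> K \<Longrightarrow> f t = g t"
  shows "apprG kern K F g"
  using assms unfolding apprG_def by metis

lemma appr1_diff:
  assumes "apprG kern K F f" "apprG kern K F g"
  shows "apprG kern K F (\<lambda>t. f t - g t)"
  using appr1_add[OF assms(1) appr1_cmult[OF assms(2), of "-1"]] by simp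

lemma appr1_limit:
  assumes "\<And>e. e > 0 \<Longrightarrow> \<exists>g. apprG kern K F g \<and> (\<forall>t\<in>K. cmod (f t - g t) < e)"
  shows "apprG kern K F f"
  unfolding apprG_def
proof (intro allI impI)
  fix e :: real assume e: "e > 0"
  obtain g where g: "apprG kern K F g" "\<forall>t\<in>K. cmod (f t - g t) < e/2"
    using assms[of "e/2"] e by auto
  obtain L where L: "\<forall>p\<in>set L. snd p \<in> F" "\<forall>t\<in>K. cmod (g t - ks kern L t) < e/2"
    using g(1) e unfolding apprG_def by (meson half_gt_zero)
  show "\<exists>L. (\<forall>p\<in>set L. snd p \<in> F) \<and> (\<forall>t\<in>K. cmod (f t - ks kern L t) < e)"
  proof (intro exI[of _ L] conjI ballI)
    fix p assume "p \<in> set L" thus "snd p \<in> F" using L by auto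
  next
    fix t assume t: "t \<in> K"
    have "cmod (f t - ks kern L t) \<le> cmod (f t - g t) + cmod (g t - ks kern L t)"
      using norm_triangle_ineq[of "f t - g t" "g t - ks kern L t"] by simp
    also have "\<dots> < e/2 + e/2" using L g t by (intro add_strict_mono) auto
    finally show "cmod (f t - ks kern L t) < e" by simp
  qed
qed

lemma appr1_base:
  assumes "\<xi> \<in> F"
  shows "appr1 K F (\<lambda>t. 1 / (\<xi> - complex_of_real t))"
  unfolding apprG_def
  by (intro allI impI exI[of _ "[(1, \<xi>)]"]) (auto simp: ks_def assms)

lemma appr1_sum_list:
  fixes kern :: "'b \<Rightarrow> 'a \<Rightarrow> complex"
  assumes "\<And>x. x \<in> set xs \<Longrightarrow> apprG kern K F (g x)"
  shows "apprG kern K F (\<lambda>t. \<Sum>x\<leftarrow>xs. g x t)"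
  using assms
proof (induction xs)
  case Nil then show ?case using appr1_zero by simp
next
  case (Cons a xs)
  then show ?case using appr1_add[of kern K F "g a" "\<lambda>t. \<Sum>x\<leftarrow>xs. g x t"] by simp
qed

lemma recip_diff_est:
  fixes a \<xi> z :: complex
  assumes d: "d > 0" "d \<le> cmod (a - z)" and r: "cmod (\<xi> - a) \<le> d/2"
  shows "cmod (1/(\<xi> - z) - 1/(a - z)) \<le> 2 * cmod (\<xi> - a) / d^2"
proof -
  have "cmod (a - z) \<le> cmod (\<xi> - z) + cmod (\<xi> - a)"
    using norm_triangle_ineq[of "\<xi> - z" "a - \<xi>"] by (simp add: norm_minus_commute)
  hence h1: "d/2 \<le> cmod (\<xi> - z)" using d r by linarith
  have nz1: "\<xi> - z \<noteq> 0" using h1 d by auto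
  have nz2: "a - z \<noteq> 0" using d by auto
  have "1/(\<xi> - z) - 1/(a - z) = (a - \<xi>) / ((\<xi> - z) * (a - z))"
    using nz1 nz2 by (simp add: field_simps)
  hence "cmod (1/(\<xi> - z) - 1/(a - z)) = cmod (\<xi> - a) / (cmod (\<xi> - z) * cmod (a - z))"
    by (simp add: norm_divide norm_mult norm_minus_commute)
  also have "\<dots> \<le> cmod (\<xi> - a) / ((d/2) * d)"
    using h1 d by (intro divide_left_mono mult_mono) (auto intro!: mult_pos_pos)
  also have "\<dots> = 2 * cmod (\<xi> - a) / d^2" by (simp add: power2_eq_square)
  finally show ?thesis .
qed

lemma pf_ident:
  fixes x y :: complex
  assumes "x \<noteq> 0" "y \<noteq> 0" "y \<noteq> x"
  shows "(1/x) * (1/y) = (1/x - 1/y) / (y - x)"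
  using assms by (simp add: field_simps)

lemma appr1_powers:
  fixes K :: "real set" and F :: "complex set"
  assumes K: "compact K" and lim: "a islimpt F" and aK: "a \<notin> complex_of_real ` K"
    and FK: "\<And>t. t \<in> K \<Longrightarrow> complex_of_real t \<notin> F"
  shows "appr1 K F (\<lambda>t. (1 / (a - complex_of_real t)) ^ Suc k)"
proof -
  have "compact (complex_of_real ` K)"
    using K by (intro compact_continuous_image continuous_intros)
  then obtain d where d: "d > 0" "\<And>x. x \<in> complex_of_real ` K \<Longrightarrow> d \<le> dist a x"
    using separate_point_closed[OF compact_imp_closed aK] by blast
  have dK: "d \<le> cmod (a - complex_of_real t)" if "t \<in> K" for t
    using d(2)[of "complex_of_real t"] that by (simp add: dist_norm)
  have sa: "cmod (1 / (a - complex_of_real t)) \<le> 1/d" if "t \<in> K" for t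
    using dK[OF that] d(1) by (simp add: norm_divide frac_le)
  have lim_step: "appr1 K F (\<lambda>t. (1 / (a - complex_of_real t)) ^ Suc k)"
    if IH: "\<forall>\<xi>\<in>F-{a}. appr1 K F (\<lambda>t. 1 / (\<xi> - complex_of_real t) * (1 / (a - complex_of_real t)) ^ k)" for k
  proof (rule appr1_limit)
    fix e :: real assume e: "e > 0"
    define r where "r = min (d/2) (e * d^(k+2) / 4)"
    have r: "r > 0" using d e by (simp add: r_def)
    obtain \<xi> where \<xi>: "\<xi> \<in> F" "\<xi> \<noteq> a" "dist \<xi> a < r"
      using lim r unfolding islimpt_approachable by blast
    show "\<exists>g. appr1 K F g \<and> (\<forall>t\<in>K. cmod ((1 / (a - complex_of_real t)) ^ Suc k - g t) < e)"
    proof (intro exI conjI ballI)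
      show "appr1 K F (\<lambda>t. 1 / (\<xi> - complex_of_real t) * (1 / (a - complex_of_real t)) ^ k)"
        using IH \<xi> by auto
    next
      fix t assume t: "t \<in> K"
      have rd: "cmod (\<xi> - a) \<le> d/2" using \<xi>(3) by (simp add: r_def dist_norm)
      have "(1 / (a - complex_of_real t)) ^ Suc k - 1 / (\<xi> - complex_of_real t) * (1 / (a - complex_of_real t)) ^ k
          = (1 / (a - complex_of_real t)) ^ k * (1 / (a - complex_of_real t) - 1 / (\<xi> - complex_of_real t))"
        by (simp add: algebra_simps)
      hence "cmod ((1 / (a - complex_of_real t)) ^ Suc k - 1 / (\<xi> - complex_of_real t) * (1 / (a - complex_of_real t)) ^ k)
          = cmod (1 / (a - complex_of_real t)) ^ k * cmod (1 / (\<xi> - complex_of_real t) - 1 / (a - complex_of_real t))"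
        by (simp add: norm_mult norm_power norm_minus_commute)
      also have "\<dots> \<le> (1/d)^k * (2 * cmod (\<xi> - a) / d^2)"
        using sa[OF t] recip_diff_est[OF d(1) dK[OF t] rd] d(1)
        by (intro mult_mono power_mono) auto
      also have "\<dots> < (1/d)^k * (2 * (e * d^(k+2) / 4) / d^2)"
      proof -
        have "cmod (\<xi> - a) < e * d^(k+2) / 4" using \<xi>(3) by (simp add: r_def dist_norm)
        thus ?thesis using d(1) by (intro mult_strict_left_mono divide_strict_right_mono) auto
      qed
      also have "\<dots> = e / 2" using d(1) by (simp add: field_simps power_add power2_eq_square)
      also have "\<dots> < e" using e by simp
      finally show "cmod ((1 / (a - complex_of_real t)) ^ Suc k - 1 / (\<xi> - complex_of_real t) * (1 / (a - complex_of_real t)) ^ k) < e" .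
    qed
  qed
  have main: "(\<forall>\<xi>\<in>F-{a}. appr1 K F (\<lambda>t. 1 / (\<xi> - complex_of_real t) * (1 / (a - complex_of_real t)) ^ k))
     \<and> appr1 K F (\<lambda>t. (1 / (a - complex_of_real t)) ^ Suc k)" for k
  proof (induction k)
    case 0
    have "\<forall>\<xi>\<in>F-{a}. appr1 K F (\<lambda>t. 1 / (\<xi> - complex_of_real t) * (1 / (a - complex_of_real t)) ^ 0)"
      using appr1_base by auto
    with lim_step show ?case by blast
  next
    case (Suc k)
    have A: "\<forall>\<xi>\<in>F-{a}. appr1 K F (\<lambda>t. 1 / (\<xi> - complex_of_real t) * (1 / (a - complex_of_real t)) ^ Suc k)"
    proof
      fix \<xi> assume \<xi>: "\<xi> \<in> F - {a}"
      have "appr1 K F (\<lambda>t. (1 / (a - \<xi>)) * (1 / (\<xi> - complex_of_real t) * (1 / (a - complex_of_real t)) ^ k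
              - (1 / (a - complex_of_real t)) ^ Suc k))"
        using Suc \<xi> by (intro appr1_cmult appr1_diff) auto
      then show "appr1 K F (\<lambda>t. 1 / (\<xi> - complex_of_real t) * (1 / (a - complex_of_real t)) ^ Suc k)"
      proof (rule appr1_cong)
        fix t assume t: "t \<in> K"
        have n1: "\<xi> - complex_of_real t \<noteq> 0" using FK[OF t] \<xi> by auto
        have n2: "a - complex_of_real t \<noteq> 0" using aK t by auto
        have n3: "a - \<xi> \<noteq> 0" using \<xi> by auto
        show "(1 / (a - \<xi>)) * (1 / (\<xi> - complex_of_real t) * (1 / (a - complex_of_real t)) ^ k
              - (1 / (a - complex_of_real t)) ^ Suc k) =
              1 / (\<xi> - complex_of_real t) * (1 / (a - complex_of_real t)) ^ Suc k"
        proof -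
          define u where "u = 1 / (\<xi> - complex_of_real t)"
          define v where "v = 1 / (a - complex_of_real t)"
          have uv: "u * v = (u - v) / (a - \<xi>)"
            unfolding u_def v_def using pf_ident[OF n1 n2] n3 by simp
          have "(1 / (a - \<xi>)) * (u * v ^ k - v ^ Suc k) = ((u - v) / (a - \<xi>)) * v ^ k"
            using n3 by (simp add: field_simps)
          also have "\<dots> = u * v ^ Suc k" by (simp flip: uv)
          finally show ?thesis unfolding u_def v_def .
        qed
      qed
    qed
    with lim_step show ?case by blast
  qed
  show ?thesis using main by blast
qed

lemma appr1_monomial:
  fixes K :: "real set" and F :: "complex set"
  assumes Pa: "\<And>n. appr1 K F (\<lambda>t. (1 / (a - complex_of_real t)) ^ Suc n)"
    and Pb: "\<And>n. appr1 K F (\<lambda>t. (1 / (b - complex_of_real t)) ^ Suc n)"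
    and aK: "a \<notin> complex_of_real ` K" and bK: "b \<notin> complex_of_real ` K"
    and jk: "1 \<le> j + k"
  shows "appr1 K F (\<lambda>t. (1 / (a - complex_of_real t)) ^ j * (1 / (b - complex_of_real t)) ^ k)"
  using jk
proof (induction "j+k" arbitrary: j k rule: less_induct)
  case less
  show ?case
  proof (cases "j = 0")
    case True
    then obtain n where "k = Suc n" using less.prems by (cases k) auto
    then show ?thesis using Pb True by simp
  next
    case False
    then obtain j' where j': "j = Suc j'" by (cases j) auto
    show ?thesis
    proof (cases "k = 0")
      case True
      then show ?thesis using Pa j' by simp
    next
      case False
      then obtain k' where k': "k = Suc k'" by (cases k) auto
      show ?thesis
      proof (cases "a = b")
        case True
        have "appr1 K F (\<lambda>t. (1 / (a - complex_of_real t)) ^ Suc (j' + k))" by (rule Pa)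
        then show ?thesis using True j' by (simp add: power_add)
      next
        case ab: False
        have "appr1 K F (\<lambda>t. (1 / (b - a)) * ((1 / (a - complex_of_real t)) ^ Suc j' * (1 / (b - complex_of_real t)) ^ k'
             - (1 / (a - complex_of_real t)) ^ j' * (1 / (b - complex_of_real t)) ^ Suc k'))"
          using less.hyps[of j' "Suc k'"] less.hyps[of "Suc j'" k'] j' k'
          by (intro appr1_cmult appr1_diff) auto
        then show ?thesis
        proof (rule appr1_cong)
          fix t assume t: "t \<in> K"
          have n1: "a - complex_of_real t \<noteq> 0" using aK t by auto
          have n2: "b - complex_of_real t \<noteq> 0" using bK t by auto
          have n3: "b - complex_of_real t \<noteq> a - complex_of_real t" using ab by auto
          define u where "u = 1 / (a - complex_of_real t)"
          define v where "v = 1 / (b - complex_of_real t)"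
          have uv: "u * v = (u - v) / (b - a)"
            unfolding u_def v_def using pf_ident[OF n1 n2 n3] by simp
          have ba: "b - a \<noteq> 0" using ab by auto
          have "(1 / (b - a)) * (u ^ Suc j' * v ^ k' - u ^ j' * v ^ Suc k') = ((u - v) / (b - a)) * (u ^ j' * v ^ k')"
            using ba by (simp add: field_simps)
          also have "\<dots> = u ^ Suc j' * v ^ Suc k'" by (simp flip: uv add: algebra_simps)
          finally show "(1 / (b - a)) * ((1 / (a - complex_of_real t)) ^ Suc j' * (1 / (b - complex_of_real t)) ^ k'
             - (1 / (a - complex_of_real t)) ^ j' * (1 / (b - complex_of_real t)) ^ Suc k') =
             (1 / (a - complex_of_real t)) ^ j * (1 / (b - complex_of_real t)) ^ k"
            unfolding u_def v_def j' k' .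
        qed
      qed
    qed
  qed
qed

definition mon :: "complex \<times> nat \<times> nat \<Rightarrow> complex \<Rightarrow> complex" where
  "mon q z = fst q * z ^ fst (snd q) * cnj z ^ snd (snd q)"

definition evalC :: "(complex \<times> nat \<times> nat) list \<Rightarrow> complex \<Rightarrow> complex" where
  "evalC L z = (\<Sum>q\<leftarrow>L. mon q z)"

definition C0 :: "(complex \<Rightarrow> complex) \<Rightarrow> bool" where
  "C0 g \<longleftrightarrow> (\<exists>L. (\<forall>q\<in>set L. 1 \<le> fst (snd q) + snd (snd q)) \<and> g = evalC L)"

lemma evalC_append: "evalC (L1 @ L2) z = evalC L1 z + evalC L2 z"
  by (simp add: evalC_def)

lemma evalC_scale: "evalC (map (\<lambda>q. (c * fst q, snd q)) L) z = c * evalC L z"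
  by (induction L) (auto simp: evalC_def mon_def algebra_simps)

definition mulq :: "(complex \<times> nat \<times> nat) \<times> (complex \<times> nat \<times> nat) \<Rightarrow> complex \<times> nat \<times> nat" where
  "mulq pq = (fst (fst pq) * fst (snd pq), fst (snd (fst pq)) + fst (snd (snd pq)),
              snd (snd (fst pq)) + snd (snd (snd pq)))"

lemma mon_mulq: "mon (mulq (p, q)) z = mon p z * mon q z"
  by (simp add: mon_def mulq_def power_add algebra_simps)

lemma evalC_mult: "evalC (map mulq (List.product L1 L2)) z = evalC L1 z * evalC L2 z"
proof (induction L1)
  case Nil then show ?case by (simp add: evalC_def)
next
  case (Cons p L1)
  have "evalC (map mulq (map (Pair p) L2)) z = mon p z * evalC L2 z"
    by (simp add: evalC_def o_def mon_mulq sum_list_const_mult)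
  then show ?case using Cons by (simp add: evalC_append distrib_right) (simp add: evalC_def distrib_right)
qed

lemma C0_add: "C0 f \<Longrightarrow> C0 g \<Longrightarrow> C0 (\<lambda>z. f z + g z)"
  unfolding C0_def
proof (elim exE conjE)
  fix L1 L2 assume "\<forall>q\<in>set L1. 1 \<le> fst (snd q) + snd (snd q)" "f = evalC L1"
    "\<forall>q\<in>set L2. 1 \<le> fst (snd q) + snd (snd q)" "g = evalC L2"
  then show "\<exists>L. (\<forall>q\<in>set L. 1 \<le> fst (snd q) + snd (snd q)) \<and> (\<lambda>z. f z + g z) = evalC L"
    by (intro exI[of _ "L1 @ L2"]) (auto simp: evalC_append)
qed

lemma C0_cmult: "C0 f \<Longrightarrow> C0 (\<lambda>z. c * f z)"
  unfolding C0_def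
proof (elim exE conjE)
  fix L1 assume "\<forall>q\<in>set L1. 1 \<le> fst (snd q) + snd (snd q)" "f = evalC L1"
  then show "\<exists>L. (\<forall>q\<in>set L. 1 \<le> fst (snd q) + snd (snd q)) \<and> (\<lambda>z. c * f z) = evalC L"
    by (intro exI[of _ "map (\<lambda>q. (c * fst q, snd q)) L1"]) (auto simp: evalC_scale)
qed

lemma C0_mult: "C0 f \<Longrightarrow> C0 g \<Longrightarrow> C0 (\<lambda>z. f z * g z)"
  unfolding C0_def
proof (elim exE conjE)
  fix L1 L2 assume "\<forall>q\<in>set L1. 1 \<le> fst (snd q) + snd (snd q)" "f = evalC L1"
    "\<forall>q\<in>set L2. 1 \<le> fst (snd q) + snd (snd q)" "g = evalC L2"
  then show "\<exists>L. (\<forall>q\<in>set L. 1 \<le> fst (snd q) + snd (snd q)) \<and> (\<lambda>z. f z * g z) = evalC L"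
    by (intro exI[of _ "map mulq (List.product L1 L2)"]) (fastforce simp: evalC_mult mulq_def)
qed

lemma C0_zero: "C0 (\<lambda>z. 0)"
  unfolding C0_def by (intro exI[of _ "[]"]) (auto simp: evalC_def)

lemma iix: "\<i> * (x * \<i>) = - (x::complex)"
  by (simp add: complex_eq_iff)

lemma complex_real_decomp: "z = Re z *\<^sub>R 1 + Im z *\<^sub>R \<i>"
  by (simp add: complex_eq_iff)

lemma poly_C0:
  fixes P :: "complex \<Rightarrow> real"
  assumes "real_polynomial_function P"
  shows "C0 (\<lambda>z. complex_of_real (P z - P 0))"
  using assms
proof (induction P rule: real_polynomial_function.induct)
  case (linear P)
  have lin: "linear P" using linear bounded_linear.linear by blast
  have P0: "P 0 = 0" using lin by (simp add: linear_0)
  have Pz: "P z = Re z * P 1 + Im z * P \<i>" for z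
  proof -
    have "P z = P (Re z *\<^sub>R 1 + Im z *\<^sub>R \<i>)" by (simp flip: complex_real_decomp)
    also have "\<dots> = Re z * P 1 + Im z * P \<i>" using lin by (simp add: linear_add linear_scale)
    finally show ?thesis .
  qed
  define c1 where "c1 = complex_of_real (P 1) / 2 + complex_of_real (P \<i>) / (2 * \<i>)"
  define c2 where "c2 = complex_of_real (P 1) / 2 - complex_of_real (P \<i>) / (2 * \<i>)"
  have "(\<lambda>z. complex_of_real (P z - P 0)) = evalC [(c1, 1, 0), (c2, 0, 1)]"
  proof
    fix z
    have "evalC [(c1, 1, 0), (c2, 0, 1)] z = c1 * z + c2 * cnj z"
      by (simp add: evalC_def mon_def)
    also have "\<dots> = complex_of_real (P 1) * ((z + cnj z) / 2) + complex_of_real (P \<i>) * ((z - cnj z) / (2 * \<i>))"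
      by (simp add: c1_def c2_def field_simps)
    also have "\<dots> = complex_of_real (P 1) * complex_of_real (Re z) + complex_of_real (P \<i>) * complex_of_real (Im z)"
      by (simp add: complex_add_cnj complex_diff_cnj iix)
    also have "\<dots> = complex_of_real (P z - P 0)"
      by (simp add: P0 Pz[of z] algebra_simps)
    finally show "complex_of_real (P z - P 0) = evalC [(c1, 1, 0), (c2, 0, 1)] z" by simp
  qed
  then show ?case unfolding C0_def by (intro exI[of _ "[(c1, 1, 0), (c2, 0, 1)]"]) auto
next
  case (const c)
  then show ?case using C0_zero by simp
next
  case (add f g)
  have "C0 (\<lambda>z. complex_of_real (f z - f 0) + complex_of_real (g z - g 0))"
    using add.IH by (rule C0_add)
  then show ?case by (simp add: algebra_simps)
next
  case (mult f g)
  have "C0 (\<lambda>z. complex_of_real (f z - f 0) * complex_of_real (g z - g 0) +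
     (complex_of_real (f 0) * complex_of_real (g z - g 0) + complex_of_real (g 0) * complex_of_real (f z - f 0)))"
    using mult.IH by (intro C0_add C0_mult C0_cmult)
  then show ?case by (simp add: algebra_simps)
qed

lemma appr1_C0:
  fixes K :: "real set" and F :: "complex set"
  assumes mono: "\<And>j k. 1 \<le> j + k \<Longrightarrow>
      appr1 K F (\<lambda>t. (1 / (a - complex_of_real t)) ^ j * (1 / (cnj a - complex_of_real t)) ^ k)"
    and g: "C0 g"
  shows "appr1 K F (\<lambda>t. g (1 / (a - complex_of_real t)))"
proof -
  obtain L where L: "\<forall>q\<in>set L. 1 \<le> fst (snd q) + snd (snd q)" "g = evalC L"
    using g unfolding C0_def by blast
  have "appr1 K F (\<lambda>t. \<Sum>q\<leftarrow>L. fst q * ((1 / (a - complex_of_real t)) ^ fst (snd q) * (1 / (cnj a - complex_of_real t)) ^ snd (snd q)))"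
    using L(1) mono by (intro appr1_sum_list appr1_cmult) auto
  then show ?thesis
    by (rule appr1_cong) (simp add: L(2) evalC_def mon_def mult.assoc)
qed

lemma appr1_all:
  fixes K :: "real set" and F :: "complex set" and f :: "real \<Rightarrow> real"
  assumes K: "compact K" and lima: "a islimpt F" and limb: "cnj a islimpt F"
    and aK: "a \<notin> complex_of_real ` K"
    and FK: "\<And>t. t \<in> K \<Longrightarrow> complex_of_real t \<notin> F"
    and f: "continuous_on K f"
  shows "appr1 K F (\<lambda>t. complex_of_real (f t))"
proof -
  have bK: "cnj a \<notin> complex_of_real ` K"
  proof
    assume "cnj a \<in> complex_of_real ` K"
    then obtain t where "t \<in> K" "cnj a = complex_of_real t" by auto
    hence "a = complex_of_real t" by (metis complex_cnj_cnj complex_cnj_complex_of_real)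
    with aK \<open>t \<in> K\<close> show False by auto
  qed
  have Pa: "appr1 K F (\<lambda>t. (1 / (a - complex_of_real t)) ^ Suc n)" for n
    by (rule appr1_powers[OF K lima aK FK])
  have Pb: "appr1 K F (\<lambda>t. (1 / (cnj a - complex_of_real t)) ^ Suc n)" for n
    by (rule appr1_powers[OF K limb bK FK])
  have mono: "appr1 K F (\<lambda>t. (1 / (a - complex_of_real t)) ^ j * (1 / (cnj a - complex_of_real t)) ^ k)"
    if "1 \<le> j + k" for j k
    by (rule appr1_monomial[OF Pa Pb aK bK that])
  define s where "s t = 1 / (a - complex_of_real t)" for t
  have snz: "a - complex_of_real t \<noteq> 0" if "t \<in> K" for t using aK that by auto
  have s_cont: "continuous_on K s"
    unfolding s_def using snz by (intro continuous_intros) auto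
  have s0: "0 \<notin> s ` K" using snz by (auto simp: s_def)
  have sinv: "Re (a - 1 / s t) = t" if "t \<in> K" for t
    using snz[OF that] by (simp add: s_def)
  define S where "S = s ` K \<union> {0}"
  have cK: "compact (s ` K)" using compact_continuous_image[OF s_cont K] .
  have cS: "compact S" unfolding S_def using cK by auto
  define \<phi> where "\<phi> z = (if z = 0 then 0 else f (Re (a - 1 / z)))" for z
  have "continuous_on (s ` K) (\<lambda>z. f (Re (a - 1 / z)))"
  proof (rule continuous_on_compose2[OF f])
    show "continuous_on (s ` K) (\<lambda>z. Re (a - 1 / z))"
      using s0 by (intro continuous_intros) auto
    show "(\<lambda>z. Re (a - 1 / z)) ` s ` K \<subseteq> K" using sinv by auto
  qed
  hence c1: "continuous_on (s ` K) \<phi>"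
    by (rule continuous_on_cong[THEN iffD1, rotated 2]) (use s0 in \<open>auto simp: \<phi>_def\<close>)
  have phic: "continuous_on S \<phi>"
    unfolding S_def using cK c1 by (intro continuous_on_closed_Un compact_imp_closed) auto
  show ?thesis
  proof (rule appr1_limit)
    fix e :: real assume e: "e > 0"
    obtain P where P: "real_polynomial_function P" "\<And>x. x \<in> S \<Longrightarrow> \<bar>\<phi> x - P x\<bar> < e/2"
      using Stone_Weierstrass_real_polynomial_function[OF cS phic, of "e/2"] e by auto
    have C: "C0 (\<lambda>z. complex_of_real (P z - P 0))" by (rule poly_C0[OF P(1)])
    have ap: "appr1 K F (\<lambda>t. complex_of_real (P (s t) - P 0))"
      using appr1_C0[OF mono C] unfolding s_def by simp
    show "\<exists>g. appr1 K F g \<and> (\<forall>t\<in>K. cmod (complex_of_real (f t) - g t) < e)"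
    proof (intro exI conjI ballI)
      show "appr1 K F (\<lambda>t. complex_of_real (P (s t) - P 0))" by (rule ap)
    next
      fix t assume t: "t \<in> K"
      have h1: "\<bar>\<phi> (s t) - P (s t)\<bar> < e/2" using P(2)[of "s t"] t by (auto simp: S_def)
      have h2: "\<bar>\<phi> 0 - P 0\<bar> < e/2" using P(2)[of 0] by (auto simp: S_def)
      have ph1: "\<phi> (s t) = f t" using s0 t sinv[OF t] by (auto simp: \<phi>_def)
      have ph2: "\<phi> 0 = 0" by (simp add: \<phi>_def)
      have "cmod (complex_of_real (f t) - complex_of_real (P (s t) - P 0)) = \<bar>f t - (P (s t) - P 0)\<bar>"
        by (simp flip: of_real_diff)
      also have "\<dots> < e" using h1 h2 ph1 ph2 by linarith
      finally show "cmod (complex_of_real (f t) - complex_of_real (P (s t) - P 0)) < e" .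
    qed
  qed
qed

lemma ks1_nth: "ks (\<lambda>\<xi> t. 1 / (\<xi> - complex_of_real t)) L t =
   (\<Sum>k\<in>{..<length L}. fst (L ! k) * (1 / (snd (L ! k) - complex_of_real t)))"
  unfolding ks_def by (simp add: sum_list_sum_nth atLeast0LessThan)

lemma prod_approx:
  fixes p q :: "'n::finite \<Rightarrow> complex" and C \<delta> :: real
  assumes C: "C \<ge> 1" and pC: "\<And>i. cmod (p i) \<le> C" and qC: "\<And>i. cmod (q i) \<le> C"
    and d: "\<And>i. cmod (p i - q i) < \<delta>"
  shows "cmod ((\<Prod>i\<in>UNIV. p i) - (\<Prod>i\<in>UNIV. q i)) \<le> C ^ CARD('n) * (real CARD('n) * \<delta>)"
proof -
  have Cpos: "C > 0" using C by simp
  have "cmod ((\<Prod>i\<in>UNIV. p i / of_real C) - (\<Prod>i\<in>UNIV. q i / of_real C)) \<le> (\<Sum>i\<in>UNIV. cmod (p i / of_real C - q i / of_real C))"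
    using pC qC Cpos by (intro norm_prod_diff) (auto simp: norm_divide)
  also have "\<dots> \<le> (\<Sum>i\<in>(UNIV::'n set). \<delta>)"
  proof (intro sum_mono)
    fix i :: 'n
    have "cmod (p i / of_real C - q i / of_real C) = cmod (p i - q i) / C"
      using Cpos by (simp add: norm_divide flip: diff_divide_distrib)
    also have "\<dots> \<le> cmod (p i - q i)" using C by (simp add: divide_le_eq mult_le_cancel_left1)
    finally show "cmod (p i / of_real C - q i / of_real C) \<le> \<delta>" using d[of i] by simp
  qed
  also have "\<dots> = real CARD('n) * \<delta>" by simp
  finally have h: "cmod ((\<Prod>i\<in>UNIV. p i / of_real C) - (\<Prod>i\<in>UNIV. q i / of_real C)) \<le> real CARD('n) * \<delta>" .
  have eq: "(\<Prod>i\<in>UNIV. p i) - (\<Prod>i\<in>UNIV. q i) = of_real (C ^ CARD('n)) * ((\<Prod>i\<in>UNIV. p i / of_real C) - (\<Prod>i\<in>UNIV. q i / of_real C))"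
    using Cpos by (simp add: prod_dividef algebra_simps)
  have "cmod ((\<Prod>i\<in>UNIV. p i) - (\<Prod>i\<in>UNIV. q i)) = C ^ CARD('n) * cmod ((\<Prod>i\<in>UNIV. p i / of_real C) - (\<Prod>i\<in>UNIV. q i / of_real C))"
    unfolding eq using Cpos by (simp add: norm_mult norm_power)
  also have "\<dots> \<le> C ^ CARD('n) * (real CARD('n) * \<delta>)"
    using h Cpos by (intro mult_left_mono) auto
  finally show ?thesis .
qed

lemma expand_prod:
  fixes Lf :: "'n::finite \<Rightarrow> (complex \<times> complex) list"
  obtains L where "\<forall>q\<in>set L. \<forall>i. snd q $ i \<in> snd ` set (Lf i)"
    and "\<And>x. (\<Prod>i\<in>UNIV. ks (\<lambda>\<xi> t. 1 / (\<xi> - complex_of_real t)) (Lf i) (x$i)) = ks cauchy_kernel L x"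
proof -
  define H where "H = PiE (UNIV::'n set) (\<lambda>i. {..<length (Lf i)})"
  have fH: "finite H" unfolding H_def by (intro finite_PiE) auto
  obtain hs where hs: "set hs = H" "distinct hs" using finite_distinct_list[OF fH] by blast
  define c where "c h = (\<Prod>i\<in>UNIV. fst (Lf i ! h i))" for h
  define z where "z h = (\<chi> i. snd (Lf i ! h i))" for h
  define L where "L = map (\<lambda>h. (c h, z h)) hs"
  show ?thesis
  proof (rule that[of L])
    show "\<forall>q\<in>set L. \<forall>i. snd q $ i \<in> snd ` set (Lf i)"
    proof (intro ballI allI)
      fix q i assume "q \<in> set L"
      then obtain h where h: "h \<in> H" "q = (c h, z h)" using hs unfolding L_def by auto
      have "h i < length (Lf i)" using h(1) unfolding H_def by (auto simp: PiE_iff)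
      then show "snd q $ i \<in> snd ` set (Lf i)" using h(2) by (auto simp: z_def)
    qed
  next
    fix x :: "real ^ 'n"
    have "(\<Prod>i\<in>UNIV. ks (\<lambda>\<xi> t. 1 / (\<xi> - complex_of_real t)) (Lf i) (x$i))
        = (\<Prod>i\<in>UNIV. \<Sum>k\<in>{..<length (Lf i)}. fst (Lf i ! k) * (1 / (snd (Lf i ! k) - complex_of_real (x$i))))"
      by (simp add: ks1_nth)
    also have "\<dots> = (\<Sum>h\<in>H. \<Prod>i\<in>UNIV. fst (Lf i ! h i) * (1 / (snd (Lf i ! h i) - complex_of_real (x$i))))"
      unfolding H_def by (rule prod_sum_PiE) auto
    also have "\<dots> = (\<Sum>h\<in>H. c h * cauchy_kernel (z h) x)"
      by (intro sum.cong refl) (simp add: c_def z_def cauchy_kernel_def flip: prod.distrib)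
    also have "\<dots> = (\<Sum>h\<leftarrow>hs. c h * cauchy_kernel (z h) x)"
      using hs sum.distinct_set_conv_list[OF hs(2), of "\<lambda>h. c h * cauchy_kernel (z h) x"] by simp
    also have "\<dots> = ks cauchy_kernel L x"
      by (simp add: ks_def L_def o_def)
    finally show "(\<Prod>i\<in>UNIV. ks (\<lambda>\<xi> t. 1 / (\<xi> - complex_of_real t)) (Lf i) (x$i)) = ks cauchy_kernel L x" .
  qed
qed

lemma apprN_sep:
  fixes Ms :: "'n::finite \<Rightarrow> real set" and Fs :: "'n \<Rightarrow> complex set" and p :: "'n \<Rightarrow> real \<Rightarrow> real"
  assumes K: "\<And>i. compact (Ms i)" and pc: "\<And>i. continuous_on (Ms i) (p i)"
    and ap: "\<And>i. appr1 (Ms i) (Fs i) (\<lambda>t. complex_of_real (p i t))"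
  shows "apprG cauchy_kernel (prod_set_real Ms) (prod_set_complex Fs) (\<lambda>x. \<Prod>i\<in>UNIV. complex_of_real (p i (x$i)))"
proof -
  have "\<forall>i. \<exists>b. \<forall>t\<in>Ms i. \<bar>p i t\<bar> \<le> b"
  proof
    fix i
    have "bounded (p i ` Ms i)" using compact_continuous_image[OF pc K] compact_imp_bounded by blast
    then show "\<exists>b. \<forall>t\<in>Ms i. \<bar>p i t\<bar> \<le> b" unfolding bounded_iff by auto
  qed
  then obtain bf where bf: "\<And>i t. t \<in> Ms i \<Longrightarrow> \<bar>p i t\<bar> \<le> bf i" by metis
  define C where "C = 2 + (\<Sum>i\<in>UNIV. \<bar>bf i\<bar>)"
  have bfC: "\<bar>bf i\<bar> \<le> (\<Sum>i\<in>UNIV. \<bar>bf i\<bar>)" for i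
    by (rule member_le_sum) auto
  have C1: "C \<ge> 1" using bfC[of undefined] unfolding C_def by linarith
  have pC: "\<bar>p i t\<bar> \<le> C - 1" if "t \<in> Ms i" for i t
    using bf[OF that] bfC[of i] unfolding C_def by linarith
  define n where "n = CARD('n)"
  have n1: "real n \<ge> 1" unfolding n_def using finite_UNIV_card_ge_0[where 'a='n] by simp
  show ?thesis unfolding apprG_def
  proof (intro allI impI)
    fix e :: real assume e: "e > 0"
    define D where "D = C ^ n * real n + 1"
    have Dpos: "D > 0" using C1 n1 unfolding D_def by (simp add: add_pos_nonneg)
    define \<delta> where "\<delta> = min 1 (e / D)"
    have \<delta>: "\<delta> > 0" "\<delta> \<le> 1" "\<delta> \<le> e / D" using e Dpos by (auto simp: \<delta>_def)
    have "\<forall>i. \<exists>L. (\<forall>q\<in>set L. snd q \<in> Fs i) \<and>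
       (\<forall>t\<in>Ms i. cmod (complex_of_real (p i t) - ks (\<lambda>\<xi> t. 1 / (\<xi> - complex_of_real t)) L t) < \<delta>)"
      using ap \<delta>(1) unfolding apprG_def by blast
    then obtain Lf where Lf: "\<And>i. \<forall>q\<in>set (Lf i). snd q \<in> Fs i"
      "\<And>i t. t \<in> Ms i \<Longrightarrow> cmod (complex_of_real (p i t) - ks (\<lambda>\<xi> t. 1 / (\<xi> - complex_of_real t)) (Lf i) t) < \<delta>"
      by metis
    obtain L where L: "\<forall>q\<in>set L. \<forall>i. snd q $ i \<in> snd ` set (Lf i)"
      "\<And>x. (\<Prod>i\<in>UNIV. ks (\<lambda>\<xi> t. 1 / (\<xi> - complex_of_real t)) (Lf i) (x$i)) = ks cauchy_kernel L x"
      using expand_prod[of Lf] by blast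
    show "\<exists>L. (\<forall>p\<in>set L. snd p \<in> prod_set_complex Fs) \<and>
          (\<forall>t\<in>prod_set_real Ms. cmod ((\<Prod>i\<in>UNIV. complex_of_real (p i (t$i))) - ks cauchy_kernel L t) < e)"
    proof (intro exI[of _ L] conjI ballI)
      fix q assume "q \<in> set L"
      then show "snd q \<in> prod_set_complex Fs"
        using L(1) Lf(1) unfolding prod_set_complex_def by fastforce
    next
      fix x assume x: "x \<in> prod_set_real Ms"
      have xi: "x $ i \<in> Ms i" for i using x unfolding prod_set_real_def by auto
      let ?P = "\<lambda>i. complex_of_real (p i (x$i))"
      let ?Q = "\<lambda>i. ks (\<lambda>\<xi> t. 1 / (\<xi> - complex_of_real t)) (Lf i) (x$i)"
      have PC: "cmod (?P i) \<le> C" for i using pC[OF xi[of i]] by simp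
      have QC: "cmod (?Q i) \<le> C" for i
      proof -
        have "cmod (?Q i) \<le> cmod (?P i) + cmod (?P i - ?Q i)"
          using norm_triangle_ineq[of "?P i" "?Q i - ?P i"] by (simp add: norm_minus_commute)
        also have "\<dots> \<le> (C - 1) + 1" using pC[OF xi[of i]] Lf(2)[OF xi[of i]] \<delta>(2) by simp
        finally show ?thesis by simp
      qed
      have "cmod ((\<Prod>i\<in>UNIV. ?P i) - (\<Prod>i\<in>UNIV. ?Q i)) \<le> C ^ CARD('n) * (real CARD('n) * \<delta>)"
        using C1 PC QC Lf(2)[OF xi] by (intro prod_approx) auto
      also have "\<dots> = (C ^ n * real n) * \<delta>" by (simp add: n_def)
      also have "\<dots> \<le> (C ^ n * real n) * (e / D)"
        using \<delta>(3) C1 by (intro mult_left_mono) auto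
      also have "\<dots> < e"
      proof -
        have "(C ^ n * real n) * (e / D) = e * ((C ^ n * real n) / D)" by simp
        also have "\<dots> < e * 1" using e Dpos unfolding D_def by (intro mult_strict_left_mono) auto
        finally show ?thesis by simp
      qed
      finally show "cmod ((\<Prod>i\<in>UNIV. complex_of_real (p i (x$i))) - ks cauchy_kernel L x) < e"
        using L(2)[of x] by simp
    qed
  qed
qed

lemma frontier_point_exists:
  fixes U :: "complex set" and K :: "real set"
  assumes U: "open U" and sym: "\<And>z. z \<in> U \<Longrightarrow> cnj z \<in> U"
    and KU: "complex_of_real ` K \<subseteq> U" and Fne: "frontier (closure U) \<noteq> {}" and Kne: "K \<noteq> {}"
  shows "\<exists>a. a islimpt frontier (closure U) \<and> cnj a islimpt frontier (closure U) \<and>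
             a \<notin> complex_of_real ` K \<and> (\<forall>t\<in>K. complex_of_real t \<notin> frontier (closure U))"
proof -
  define F where "F = frontier (closure U)"
  define I where "I = interior (closure U)"
  define W where "W = - closure U"
  have UI: "U \<subseteq> I" unfolding I_def using U by (intro interior_maximal closure_subset) auto
  have FI: "F \<inter> I = {}" unfolding F_def I_def frontier_def by auto
  have FC: "F \<subseteq> closure U" unfolding F_def by (simp add: frontier_subset_closed)
  have KF: "\<forall>t\<in>K. complex_of_real t \<notin> F" using KU UI FI by blast
  have ex: "\<exists>a. a islimpt F"
  proof (rule ccontr)
    assume "\<nexists>a. a islimpt F"
    hence sp: "F sparse_in UNIV" by (simp add: sparse_in_open)
    have conn: "connected (UNIV - F)"
      by (rule sparse_imp_connected[OF _ connected_UNIV open_UNIV sp]) simp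
    have oW: "open W" and oI: "open I" unfolding W_def I_def by auto
    have "W \<inter> I \<inter> (UNIV - F) = {}" unfolding W_def I_def using interior_subset by blast
    moreover have "UNIV - F \<subseteq> W \<union> I" unfolding W_def I_def F_def frontier_def by auto
    ultimately have "W \<inter> (UNIV - F) = {} \<or> I \<inter> (UNIV - F) = {}"
      using connectedD[OF conn oW oI] by blast
    moreover have "W \<inter> (UNIV - F) \<noteq> {}"
    proof -
      have "closure U \<noteq> UNIV" using Fne by auto
      then obtain w where "w \<notin> closure U" by auto
      then show ?thesis using FC unfolding W_def by auto
    qed
    moreover have "I \<inter> (UNIV - F) \<noteq> {}"
    proof -
      obtain t where "t \<in> K" using Kne by auto
      then have "complex_of_real t \<in> I" "complex_of_real t \<notin> F" using KU UI KF by auto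
      then show ?thesis by blast
    qed
    ultimately show False by blast
  qed
  then obtain a where a: "a islimpt F" by blast
  have "closed F" unfolding F_def by simp
  hence aF: "a \<in> F" using a closed_limpt by blast
  have aK: "a \<notin> complex_of_real ` K" using aF KF by auto
  have injc: "inj cnj" by (metis injI complex_cnj_cnj)
  have cU: "cnj ` U = U"
  proof
    show "cnj ` U \<subseteq> U" using sym by auto
    show "U \<subseteq> cnj ` U"
    proof
      fix z assume "z \<in> U"
      then have "cnj z \<in> U" by (rule sym)
      then show "z \<in> cnj ` U" by (metis complex_cnj_cnj image_eqI)
    qed
  qed
  have cF: "cnj ` F = F"
  proof -
    have "cnj ` F = cnj ` closure (closure U) - cnj ` interior (closure U)"
      unfolding F_def frontier_def by (rule image_set_diff[OF injc])
    also have "\<dots> = closure (closure (cnj ` U)) - interior (closure (cnj ` U))"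
    proof -
      have c1: "cnj ` closure U = closure (cnj ` U)" by (rule closure_injective_linear_image[OF linear_cnj injc])
      have i1: "cnj ` interior (closure U) = interior (cnj ` closure U)"
        by (rule interior_injective_linear_image[OF linear_cnj injc, symmetric])
      show ?thesis by (simp add: c1 i1)
    qed
    also have "\<dots> = F" unfolding cU F_def frontier_def by simp
    finally show ?thesis .
  qed
  have ca: "cnj a islimpt F"
    unfolding islimpt_approachable
  proof (intro allI impI)
    fix e :: real assume "e > 0"
    then obtain x where x: "x \<in> F" "x \<noteq> a" "dist x a < e" using a unfolding islimpt_approachable by blast
    have "cnj x \<in> F" using x(1) cF by auto
    moreover have "cnj x \<noteq> cnj a" using x(2) by simp
    moreover have "dist (cnj x) (cnj a) < e" using x(3)
      by (simp add: dist_norm flip: complex_cnj_diff)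
    ultimately show "\<exists>x'\<in>F. x' \<noteq> cnj a \<and> dist x' (cnj a) < e" by blast
  qed
  show ?thesis using a ca aK KF unfolding F_def by blast
qed

definition sepf :: "(real \<times> ('n::finite \<Rightarrow> real \<Rightarrow> real)) list \<Rightarrow> real ^ 'n \<Rightarrow> real" where
  "sepf L x = (\<Sum>q\<leftarrow>L. fst q * (\<Prod>i\<in>UNIV. snd q i (x$i)))"

definition SP :: "(real ^ 'n::finite \<Rightarrow> real) \<Rightarrow> bool" where
  "SP g \<longleftrightarrow> (\<exists>L. (\<forall>q\<in>set L. \<forall>i. continuous_on UNIV (snd q i)) \<and> g = sepf L)"

lemma sum_list_product_mult:
  fixes g h :: "_ \<Rightarrow> 'a::comm_ring"
  shows "(\<Sum>q\<leftarrow>L1. g q) * (\<Sum>q\<leftarrow>L2. h q) = (\<Sum>pq\<leftarrow>List.product L1 L2. g (fst pq) * h (snd pq))"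
proof (induction L1)
  case Nil then show ?case by simp
next
  case (Cons a L1)
  have "(\<Sum>pq\<leftarrow>map (Pair a) L2. g (fst pq) * h (snd pq)) = g a * (\<Sum>q\<leftarrow>L2. h q)"
    by (induction L2) (simp_all add: algebra_simps)
  then show ?case using Cons by (simp add: distrib_right)
qed

lemma sepf_cont: "\<forall>q\<in>set L. \<forall>i. continuous_on UNIV (snd q i) \<Longrightarrow> continuous_on UNIV (sepf L)"
proof (induction L)
  case Nil then show ?case by (simp add: sepf_def)
next
  case (Cons q L)
  have "continuous_on UNIV (\<lambda>x::real^'a. \<Prod>i\<in>UNIV. snd q i (x$i))"
  proof (intro continuous_on_prod)
    fix i
    show "continuous_on UNIV (\<lambda>x::real^'a. snd q i (x$i))"
    proof (rule continuous_on_compose2[of UNIV "snd q i"])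
      show "continuous_on UNIV (snd q i)" using Cons.prems by simp
      show "continuous_on UNIV (\<lambda>x::real^'a. x $ i)" by (intro continuous_on_component continuous_on_id)
    qed simp
  qed
  then have "continuous_on UNIV (\<lambda>x::real^'a. fst q * (\<Prod>i\<in>UNIV. snd q i (x$i)) + sepf L x)"
    using Cons by (intro continuous_on_add continuous_on_mult continuous_on_const) auto
  then show ?case by (simp add: sepf_def)
qed

lemma SP_mult: "SP f \<Longrightarrow> SP g \<Longrightarrow> SP (\<lambda>x. f x * g x)"
proof -
  assume "SP f" "SP g"
  then obtain L1 L2 where L1: "\<forall>q\<in>set L1. \<forall>i. continuous_on UNIV (snd q i)" "f = sepf L1"
    and L2: "\<forall>q\<in>set L2. \<forall>i. continuous_on UNIV (snd q i)" "g = sepf L2"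
    unfolding SP_def by blast
  define L where "L = map (\<lambda>pq. (fst (fst pq) * fst (snd pq), \<lambda>i t. snd (fst pq) i t * snd (snd pq) i t)) (List.product L1 L2)"
  have "\<forall>q\<in>set L. \<forall>i. continuous_on UNIV (snd q i)"
    unfolding L_def using L1(1) L2(1) by (fastforce intro!: continuous_on_mult)
  moreover have "(\<lambda>x. f x * g x) = sepf L"
  proof
    fix x
    show "f x * g x = sepf L x"
      unfolding L1(2) L2(2) sepf_def sum_list_product_mult L_def
      by (simp add: o_def prod.distrib algebra_simps)
  qed
  ultimately show ?thesis unfolding SP_def by blast
qed

lemma SP_add: "SP f \<Longrightarrow> SP g \<Longrightarrow> SP (\<lambda>x. f x + g x)"
  unfolding SP_def
proof (elim exE conjE)
  fix L1 L2 assume "\<forall>q\<in>set L1. \<forall>i. continuous_on UNIV (snd q i)" "f = sepf L1"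
    "\<forall>q\<in>set L2. \<forall>i. continuous_on UNIV (snd q i)" "g = sepf L2"
  then show "\<exists>L. (\<forall>q\<in>set L. \<forall>i. continuous_on UNIV (snd q i)) \<and> (\<lambda>x. f x + g x) = sepf L"
    by (intro exI[of _ "L1 @ L2"]) (auto simp: sepf_def)
qed

lemma SP_const: "SP (\<lambda>x. c)"
  unfolding SP_def
  by (intro exI[of _ "[(c, \<lambda>i t. 1)]"]) (auto simp: sepf_def)

lemma SP_coord: "SP (\<lambda>x. x $ i)"
  unfolding SP_def
proof (intro exI[of _ "[(1, \<lambda>j (t::real). if j = i then t else 1)]"] conjI)
  show "\<forall>q\<in>set [(1::real, \<lambda>j (t::real). if j = i then t else 1)]. \<forall>j. continuous_on UNIV (snd q j)"
  proof (intro ballI allI)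
    fix q j assume "q \<in> set [(1::real, \<lambda>j (t::real). if j = i then t else 1)]"
    then show "continuous_on UNIV (snd q j)" by (cases "j = i") (auto intro: continuous_on_id continuous_on_const)
  qed
  show "(\<lambda>x. x $ i) = sepf [(1, \<lambda>j (t::real). if j = i then t else (1::real))]"
    by (simp add: sepf_def fun_eq_iff)
qed

lemma of_real_sum_list': "complex_of_real (\<Sum>q\<leftarrow>L. h q) = (\<Sum>q\<leftarrow>L. complex_of_real (h q))"
  by (induction L) auto

theorem theorem2:
  fixes Ms :: "'n::finite \<Rightarrow> real set"
    and Us :: "'n \<Rightarrow> complex set"
    and f :: "real ^ 'n \<Rightarrow> real"
  assumes M_compact: "compact (prod_set_real Ms)"
    and U_open: "\<And>i. open (Us i)"
    and U_connected: "\<And>i. connected (Us i)"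
    and U_symm: "\<And>i z. z \<in> Us i \<Longrightarrow> cnj z \<in> Us i"
    and M_sub_U: "\<And>i. complex_of_real ` Ms i \<subseteq> Us i"
    and bdry_nonempty: "\<And>i. frontier (closure (Us i)) \<noteq> {}"
    and f_cont: "continuous_on (prod_set_real Ms) f"
  shows "\<forall>\<epsilon>>0. \<exists>m\<ge>1. \<exists>\<theta> :: nat \<Rightarrow> complex. \<exists>\<xi> :: nat \<Rightarrow> complex ^ 'n.
           (\<forall>k\<in>{1..m}. \<xi> k \<in> prod_set_complex (\<lambda>i. frontier (closure (Us i)))) \<and>
           (\<forall>x\<in>prod_set_real Ms.
              cmod (complex_of_real (f x) - (\<Sum>k=1..m. \<theta> k * cauchy_kernel (\<xi> k) x)) < \<epsilon>)"
proof -
  define M where "M = prod_set_real Ms"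
  define Fs where "Fs i = frontier (closure (Us i))" for i
  define B where "B = prod_set_complex Fs"
  have main: "apprG cauchy_kernel M B (\<lambda>x. complex_of_real (f x))"
  proof (cases "M = {}")
    case True
    then show ?thesis unfolding apprG_def by (intro allI impI exI[of _ "[]"]) auto
  next
    case False
    then obtain x0 where x0: "x0 \<in> M" by auto
    have Mi: "Ms i = (\<lambda>x. x $ i) ` M" for i
    proof
      show "(\<lambda>x. x $ i) ` M \<subseteq> Ms i" unfolding M_def prod_set_real_def by auto
      show "Ms i \<subseteq> (\<lambda>x. x $ i) ` M"
      proof
        fix t assume t: "t \<in> Ms i"
        define y where "y = (\<chi> j. if j = i then t else x0 $ j)"
        have "y \<in> M" using x0 t unfolding M_def prod_set_real_def y_def by auto
        moreover have "t = y $ i" by (simp add: y_def)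
        ultimately show "t \<in> (\<lambda>x. x $ i) ` M" by blast
      qed
    qed
    have Kc: "compact (Ms i)" for i
      unfolding Mi using M_compact unfolding M_def
      by (intro compact_continuous_image) (auto intro: continuous_intros)
    have Kne: "Ms i \<noteq> {}" for i unfolding Mi using x0 by auto
    have a_ex: "\<exists>a. a islimpt Fs i \<and> cnj a islimpt Fs i \<and> a \<notin> complex_of_real ` Ms i \<and>
             (\<forall>t\<in>Ms i. complex_of_real t \<notin> Fs i)" for i
      unfolding Fs_def
      by (rule frontier_point_exists[OF U_open U_symm M_sub_U bdry_nonempty Kne])
    have ap1: "appr1 (Ms i) (Fs i) (\<lambda>t. complex_of_real (p t))" if pu: "continuous_on UNIV p" for i p
    proof -
      obtain a where a: "a islimpt Fs i" "cnj a islimpt Fs i" "a \<notin> complex_of_real ` Ms i"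
        "\<And>t. t \<in> Ms i \<Longrightarrow> complex_of_real t \<notin> Fs i"
        using a_ex[of i] by blast
      have pc: "continuous_on (Ms i) p" using pu continuous_on_subset by blast
      show ?thesis using appr1_all[OF Kc a(1,2,3) _ pc] a(4) by blast
    qed
    have apSP: "apprG cauchy_kernel M B (\<lambda>x. complex_of_real (g x))" if sg: "SP g" for g
    proof -
      obtain L where L: "\<forall>q\<in>set L. \<forall>i. continuous_on UNIV (snd q i)" "g = sepf L"
        using sg unfolding SP_def by blast
      have "apprG cauchy_kernel M B (\<lambda>x. \<Sum>q\<leftarrow>L. complex_of_real (fst q) * (\<Prod>i\<in>UNIV. complex_of_real (snd q i (x$i))))"
      proof (intro appr1_sum_list appr1_cmult)
        fix q assume q: "q \<in> set L"
        show "apprG cauchy_kernel M B (\<lambda>x. \<Prod>i\<in>UNIV. complex_of_real (snd q i (x$i)))"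
          unfolding M_def B_def
        proof (rule apprN_sep[OF Kc])
          fix i
          show "continuous_on (Ms i) (snd q i)" using L(1) q by (auto intro: continuous_on_subset)
          show "appr1 (Ms i) (Fs i) (\<lambda>t. complex_of_real (snd q i t))" using L(1) q by (auto intro: ap1)
        qed
      qed
      then show ?thesis
        by (rule appr1_cong) (simp add: L(2) sepf_def o_def of_real_sum_list' of_real_prod)
    qed
    show ?thesis
    proof (rule appr1_limit)
      fix e :: real assume e: "e > 0"
      have "\<exists>g. SP g \<and> (\<forall>x\<in>M. \<bar>f x - g x\<bar> < e)"
      proof (rule Stone_Weierstrass_HOL[of M SP f e])
        show "compact M" using M_compact by (simp add: M_def)
        show "\<And>c. SP (\<lambda>x. c)" by (rule SP_const)
        show "\<And>g. SP g \<Longrightarrow> continuous_on M g"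
          unfolding SP_def using sepf_cont by (auto intro: continuous_on_subset)
        show "\<And>f g. SP f \<and> SP g \<Longrightarrow> SP (\<lambda>x. f x + g x)" using SP_add by blast
        show "\<And>f g. SP f \<and> SP g \<Longrightarrow> SP (\<lambda>x. f x * g x)" using SP_mult by blast
        show "\<And>x y. x \<in> M \<and> y \<in> M \<and> x \<noteq> y \<Longrightarrow> \<exists>f. SP f \<and> f x \<noteq> f y"
        proof -
          fix x y :: "real ^ 'n" assume "x \<in> M \<and> y \<in> M \<and> x \<noteq> y"
          then obtain i where "x $ i \<noteq> y $ i" by (auto simp: vec_eq_iff)
          then show "\<exists>f. SP f \<and> f x \<noteq> f y" using SP_coord[of i] by blast
        qed
        show "continuous_on M f" using f_cont by (simp add: M_def)
        show "0 < e" by (rule e)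
      qed
      then obtain g where g: "SP g" "\<forall>x\<in>M. \<bar>f x - g x\<bar> < e" by blast
      show "\<exists>g. apprG cauchy_kernel M B g \<and> (\<forall>t\<in>M. cmod (complex_of_real (f t) - g t) < e)"
      proof (intro exI conjI ballI)
        show "apprG cauchy_kernel M B (\<lambda>x. complex_of_real (g x))" by (rule apSP[OF g(1)])
        fix t assume "t \<in> M"
        then show "cmod (complex_of_real (f t) - complex_of_real (g t)) < e"
          using g(2) by (simp flip: of_real_diff)
      qed
    qed
  qed
  have "\<forall>i. \<exists>z. z \<in> Fs i" using bdry_nonempty unfolding Fs_def by blast
  then obtain zf where zf: "\<And>i. zf i \<in> Fs i" by metis
  define \<xi>0 where "\<xi>0 = (\<chi> i. zf i)"
  have \<xi>0B: "\<xi>0 \<in> B" unfolding B_def prod_set_complex_def \<xi>0_def using zf by simp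
  show ?thesis
  proof (intro allI impI)
    fix \<epsilon> :: real assume e: "\<epsilon> > 0"
    obtain L where L: "\<forall>p\<in>set L. snd p \<in> B" "\<forall>x\<in>M. cmod (complex_of_real (f x) - ks cauchy_kernel L x) < \<epsilon>"
      using main e unfolding apprG_def by blast
    define L' where "L' = (0, \<xi>0) # L"
    have L'B: "\<forall>p\<in>set L'. snd p \<in> B" using L(1) \<xi>0B by (simp add: L'_def)
    have ksL': "ks cauchy_kernel L' x = ks cauchy_kernel L x" for x by (simp add: L'_def ks_def)
    define m where "m = length L'"
    have m1: "m \<ge> 1" by (simp add: m_def L'_def)
    have sumeq: "(\<Sum>k=1..m. fst (L' ! (k - 1)) * cauchy_kernel (snd (L' ! (k - 1))) x) = ks cauchy_kernel L' x" for x
    proof -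
      have "(\<Sum>k=1..m. fst (L' ! (k - 1)) * cauchy_kernel (snd (L' ! (k - 1))) x)
          = (\<Sum>k<m. fst (L' ! k) * cauchy_kernel (snd (L' ! k)) x)"
        by (subst image_Suc_lessThan[symmetric], subst sum.reindex) auto
      also have "\<dots> = ks cauchy_kernel L' x"
        unfolding ks_def m_def by (simp add: sum_list_sum_nth atLeast0LessThan)
      finally show ?thesis .
    qed
    show "\<exists>m\<ge>1. \<exists>\<theta> :: nat \<Rightarrow> complex. \<exists>\<xi> :: nat \<Rightarrow> complex ^ 'n.
           (\<forall>k\<in>{1..m}. \<xi> k \<in> prod_set_complex (\<lambda>i. frontier (closure (Us i)))) \<and>
           (\<forall>x\<in>prod_set_real Ms.
              cmod (complex_of_real (f x) - (\<Sum>k=1..m. \<theta> k * cauchy_kernel (\<xi> k) x)) < \<epsilon>)"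
    proof (intro exI[of _ m] conjI exI[of _ "\<lambda>k. fst (L' ! (k - 1))"] exI[of _ "\<lambda>k. snd (L' ! (k - 1))"] ballI m1)
      fix k assume k: "k \<in> {1..m}"
      then have "L' ! (k - 1) \<in> set L'" unfolding m_def by auto
      then show "snd (L' ! (k - 1)) \<in> prod_set_complex (\<lambda>i. frontier (closure (Us i)))"
        using L'B unfolding B_def Fs_def by blast
    next
      fix x assume "x \<in> prod_set_real Ms"
      then show "cmod (complex_of_real (f x) - (\<Sum>k=1..m. fst (L' ! (k - 1)) * cauchy_kernel (snd (L' ! (k - 1))) x)) < \<epsilon>"
        using L(2) unfolding sumeq ksL' M_def by blast
    qed
  qed
qed

end
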